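(* Let $\varphi$ be an own-peak-only rule on $\mathcal{E}_{\mathcal{SP}}$. If $\varphi$ is envy-free, or if $\varphi$ satisfies the equal division lower bound, then $\varphi$ meets the equal division guarantee.
   Context: Let $N=\{1,\dots,n\}$ be a finite set of agents. A preference $R_i$ is a continuous complete preorder on $\mathbb{R}_+\cup\{\infty\}$ ($P_i$ strict, $I_i$ indifference); its peak $p(R_i)$ is the set of maximal elements. $R_i$ is single-peaked if $p(R_i)$ is a singleton (identified with its element) and for $x,x'\in\mathbb{R}_+$, $xP_ix'$ whenever $x'<x\le p(R_i)$ or $p(R_i)\le x<x'$; $\mathcal{SP}$ is the set of these. An economy is $(R,\Omega)$, $R\in\mathcal{SP}^n$, $\Omega>0$; $\mathcal{E}_{\mathcal{SP}}$ is the set of economies; a rule is a map $\varphi:\mathcal{E}_{\mathcal{SP}}\to\mathbb{R}^n_+$ with $\sum_j\varphi_j(R,\Omega)=\Omega$. Own-peak-only: $p(R_i')=p(R_i)$ implies $\varphi_i(R,\Omega)=\varphi_i(R_i',R_{-i},\Omega)$. Envy-free: for all economies and $i\ne j$, $\varphi_i(R,\Omega)R_i\varphi_j(R,\Omega)$. Equal division lower bound: for all economies and $i$, $\varphi_i(R,\Omega)R_i\frac{\Omega}{n}$. Equal division guarantee: for all economies and $i$ with $p(R_i)=\Omega/n$, $\varphi_i(R,\Omega)I_i\frac{\Omega}{n}$. *)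

theory Defs
  imports "HOL-Analysis.Analysis" "HOL-Library.Extended_Real"
begin

text \<open>Consumption space R_+ \<union> {\<infinity>}, rendered as the nonnegative extended reals.\<close>
definition cdom :: "ereal set" where
  "cdom = {x. 0 \<le> x}"

type_synonym pref = "ereal \<Rightarrow> ereal \<Rightarrow> bool"  (* R x y : x is at least as good as y *)

definition strict :: "pref \<Rightarrow> ereal \<Rightarrow> ereal \<Rightarrow> bool" where
  "strict R x y \<longleftrightarrow> R x y \<and> \<not> R y x"

definition indiff :: "pref \<Rightarrow> ereal \<Rightarrow> ereal \<Rightarrow> bool" where
  "indiff R x y \<longleftrightarrow> R x y \<and> R y x"

definition is_pref :: "pref \<Rightarrow> bool" where
  "is_pref R \<longleftrightarrow>
     (\<forall>x\<in>cdom. R x x) \<and>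
     (\<forall>x\<in>cdom. \<forall>y\<in>cdom. \<forall>z\<in>cdom. R x y \<and> R y z \<longrightarrow> R x z) \<and>
     (\<forall>x\<in>cdom. \<forall>y\<in>cdom. R x y \<or> R y x) \<and>
     (\<forall>x\<in>cdom. closedin (top_of_set cdom) {y\<in>cdom. R y x} \<and>
                closedin (top_of_set cdom) {y\<in>cdom. R x y})"

definition peak_set :: "pref \<Rightarrow> ereal set" where
  "peak_set R = {x\<in>cdom. \<forall>y\<in>cdom. R x y}"

definition peak :: "pref \<Rightarrow> ereal" where
  "peak R = the_elem (peak_set R)"

definition single_peaked :: "pref \<Rightarrow> bool" where
  "single_peaked R \<longleftrightarrow> is_pref R \<and> (\<exists>p. peak_set R = {p}) \<and>
     (\<forall>x x' :: real. 0 \<le> x \<and> 0 \<le> x' \<and>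
        ((x' < x \<and> ereal x \<le> peak R) \<or> (peak R \<le> ereal x \<and> x < x'))
        \<longrightarrow> strict R (ereal x) (ereal x'))"

text \<open>Agents are the elements of a finite type 'a; n = CARD('a).\<close>
definition economy :: "('a \<Rightarrow> pref) \<Rightarrow> real \<Rightarrow> bool" where
  "economy R \<Omega> \<longleftrightarrow> (\<forall>i. single_peaked (R i)) \<and> \<Omega> > 0"

definition is_rule :: "(('a::finite \<Rightarrow> pref) \<Rightarrow> real \<Rightarrow> 'a \<Rightarrow> real) \<Rightarrow> bool" where
  "is_rule \<phi> \<longleftrightarrow> (\<forall>R \<Omega>. economy R \<Omega> \<longrightarrow>
      (\<forall>i. 0 \<le> \<phi> R \<Omega> i) \<and> (\<Sum>j\<in>UNIV. \<phi> R \<Omega> j) = \<Omega>)"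

definition own_peak_only :: "(('a::finite \<Rightarrow> pref) \<Rightarrow> real \<Rightarrow> 'a \<Rightarrow> real) \<Rightarrow> bool" where
  "own_peak_only \<phi> \<longleftrightarrow> (\<forall>R \<Omega> i R'. economy R \<Omega> \<and> single_peaked R' \<and> peak R' = peak (R i)
      \<longrightarrow> \<phi> R \<Omega> i = \<phi> (R(i := R')) \<Omega> i)"

definition envy_free :: "(('a::finite \<Rightarrow> pref) \<Rightarrow> real \<Rightarrow> 'a \<Rightarrow> real) \<Rightarrow> bool" where
  "envy_free \<phi> \<longleftrightarrow> (\<forall>R \<Omega> i j. economy R \<Omega> \<and> i \<noteq> j
      \<longrightarrow> R i (ereal (\<phi> R \<Omega> i)) (ereal (\<phi> R \<Omega> j)))"

definition ed_lower_bound :: "(('a::finite \<Rightarrow> pref) \<Rightarrow> real \<Rightarrow> 'a \<Rightarrow> real) \<Rightarrow> bool" where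
  "ed_lower_bound \<phi> \<longleftrightarrow> (\<forall>R \<Omega> i. economy R \<Omega>
      \<longrightarrow> R i (ereal (\<phi> R \<Omega> i)) (ereal (\<Omega> / real CARD('a))))"

definition ed_guarantee :: "(('a::finite \<Rightarrow> pref) \<Rightarrow> real \<Rightarrow> 'a \<Rightarrow> real) \<Rightarrow> bool" where
  "ed_guarantee \<phi> \<longleftrightarrow> (\<forall>R \<Omega> i. economy R \<Omega> \<and> peak (R i) = ereal (\<Omega> / real CARD('a))
      \<longrightarrow> indiff (R i) (ereal (\<phi> R \<Omega> i)) (ereal (\<Omega> / real CARD('a))))"

end

theory Submission
  imports Defs
begin
definition fv :: "real \<Rightarrow> real \<Rightarrow> ereal \<Rightarrow> ereal" where
  "fv c p x = min (ereal c * (x + ereal (-p))) (- x + ereal p)"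

lemma fv_cont: "continuous_on UNIV (fv c p)"
  unfolding continuous_on_def
proof
  fix x :: ereal
  let ?F = "at x within UNIV"
  have t1: "((\<lambda>y. y + ereal (-p)) \<longlongrightarrow> x + ereal (-p)) ?F"
    by (rule tendsto_add_left_ereal) (simp_all add: tendsto_ident_at)
  have t2: "((\<lambda>y. ereal c * (y + ereal (-p))) \<longlongrightarrow> ereal c * (x + ereal (-p))) ?F"
    by (rule tendsto_cmult_ereal[OF _ t1]) simp
  have t3: "((\<lambda>y. - y + ereal p) \<longlongrightarrow> - x + ereal p) ?F"
    by (rule tendsto_add_left_ereal[OF _ tendsto_uminus_ereal[OF tendsto_ident_at]]) simp
  show "(fv c p \<longlongrightarrow> fv c p x) ?F"
    unfolding fv_def by (rule tendsto_min[OF t2 t3])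
qed

lemma fv_real: "0 < c \<Longrightarrow> fv c p (ereal x) = ereal (min (c*(x-p)) (p-x))"
  by (simp add: fv_def min_def)

lemma fv_inf: "0 < c \<Longrightarrow> fv c p \<infinity> = -\<infinity>"
  by (simp add: fv_def)

lemma fv_minf: "0 < c \<Longrightarrow> fv c p (-\<infinity>) = -\<infinity>"
  by (simp add: fv_def)

definition fpref :: "real \<Rightarrow> real \<Rightarrow> pref" where
  "fpref c p = (\<lambda>x y. fv c p y \<le> fv c p x)"

lemma closed_sets: "closedin (top_of_set cdom) {y\<in>cdom. fpref c p y x}"
   "closedin (top_of_set cdom) {y\<in>cdom. fpref c p x y}"
proof -
  have co: "continuous_on cdom (fv c p)" by (rule continuous_on_subset[OF fv_cont]) simp
  have e1: "cdom \<inter> fv c p -` {fv c p x..} = {y\<in>cdom. fpref c p y x}"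
    unfolding fpref_def by auto
  have e2: "cdom \<inter> fv c p -` {..fv c p x} = {y\<in>cdom. fpref c p x y}"
    unfolding fpref_def by auto
  show "closedin (top_of_set cdom) {y\<in>cdom. fpref c p y x}"
    using continuous_closedin_preimage[OF co closed_atLeast[of "fv c p x"]] unfolding e1 .
  show "closedin (top_of_set cdom) {y\<in>cdom. fpref c p x y}"
    using continuous_closedin_preimage[OF co closed_atMost[of "fv c p x"]] unfolding e2 .
qed

lemma fv_max: assumes "0 < c" "x \<noteq> ereal p" shows "fv c p x < fv c p (ereal p)"
proof (cases x)
  case (real r)
  then have "r \<noteq> p" using assms by auto
  have "min (c*(r-p)) (p-r) < 0"
  proof (cases "r < p")
    case True
    then have "c*(r-p) < 0" using assms(1) by (simp add: mult_pos_neg)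
    then show ?thesis by simp
  next
    case False
    then show ?thesis using \<open>r \<noteq> p\<close> by simp
  qed
  moreover have "fv c p x = ereal (min (c*(r-p)) (p-r))" using real assms(1) fv_real by blast
  moreover have "fv c p (ereal p) = ereal 0" using assms(1) fv_real[of c p p] by simp
  ultimately show ?thesis by (simp only: less_ereal.simps(1))
qed (use assms in \<open>auto simp: fv_real fv_inf fv_minf\<close>)

lemma fv_less: "0 < c \<Longrightarrow> fv c p (ereal a) < fv c p (ereal b) \<longleftrightarrow> min (c*(a-p)) (p-a) < min (c*(b-p)) (p-b)"
  by (simp only: fv_real less_ereal.simps(1))

lemma fpref_sp: assumes "0 < c" "0 \<le> p"
  shows "single_peaked (fpref c p)" "peak (fpref c p) = ereal p"
proof -
  have ps: "peak_set (fpref c p) = {ereal p}"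
  proof -
    have a: "fv c p y \<le> fv c p (ereal p)" for y
      using fv_max[OF assms(1), of y p] by (cases "y = ereal p") auto
    have b: "x = ereal p" if "\<forall>y\<in>cdom. fv c p y \<le> fv c p x" for x
    proof (rule ccontr)
      assume "x \<noteq> ereal p"
      then have "fv c p x < fv c p (ereal p)" by (rule fv_max[OF assms(1)])
      moreover have "ereal p \<in> cdom" using assms(2) by (simp add: cdom_def)
      ultimately show False using that by (meson not_le)
    qed
    show ?thesis unfolding peak_set_def fpref_def using a b assms(2)
      by (auto simp: cdom_def)
  qed
  then have pk: "peak (fpref c p) = ereal p" by (simp add: peak_def)
  show "peak (fpref c p) = ereal p" by (fact pk)
  have ip: "is_pref (fpref c p)"
    unfolding is_pref_def using closed_sets[of c p]
    by (auto simp: fpref_def)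
  have st: "strict (fpref c p) (ereal x) (ereal x')"
    if "0 \<le> x" "0 \<le> x'" "(x' < x \<and> x \<le> p) \<or> (p \<le> x \<and> x < x')" for x x'
  proof -
    have "min (c*(x'-p)) (p-x') < min (c*(x-p)) (p-x)"
      using that(3)
    proof (elim disjE)
      assume h: "x' < x \<and> x \<le> p"
      have "c*(x'-p) < c*(x-p)" using h assms(1) by simp
      moreover have "c*(x-p) \<le> 0" using h assms(1) by (simp add: mult_nonneg_nonpos)
      ultimately show ?thesis using h by (simp add: min_def)
    next
      assume h: "p \<le> x \<and> x < x'"
      have "c*(x-p) \<ge> 0" using h assms(1) by simp
      moreover have "c*(x'-p) \<ge> 0" using h assms(1) by simp
      ultimately show ?thesis using h by (simp add: min_def)
    qed
    then have "fv c p (ereal x') < fv c p (ereal x)" using fv_less[OF assms(1)] by blast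
    then show ?thesis by (auto simp: strict_def fpref_def)
  qed
  show "single_peaked (fpref c p)"
    unfolding single_peaked_def using ip ps pk st by auto
qed

lemma exists_big:
  fixes f :: "'a::finite \<Rightarrow> real"
  assumes "sum f UNIV = real CARD('a) * p" "f i < p"
  shows "\<exists>j. j \<noteq> i \<and> f j > p"
proof (rule ccontr)
  assume "\<not> ?thesis"
  then have "\<forall>j\<in>UNIV-{i}. f j \<le> p" by auto
  then have "sum f (UNIV-{i}) \<le> sum (\<lambda>_. p) (UNIV-{i})" by (intro sum_mono) auto
  also have "\<dots> = (real CARD('a) - 1) * p"
    by (simp add: card_Diff_singleton of_nat_diff)
  finally have "sum f UNIV \<le> f i + (real CARD('a) - 1) * p"
    by (simp add: sum.remove[of UNIV i])
  then show False using assms by (simp add: algebra_simps)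
qed

lemma exists_small:
  fixes f :: "'a::finite \<Rightarrow> real"
  assumes "sum f UNIV = real CARD('a) * p" "f i > p"
  shows "\<exists>j. j \<noteq> i \<and> f j < p"
proof (rule ccontr)
  assume "\<not> ?thesis"
  then have "\<forall>j\<in>UNIV-{i}. f j \<ge> p" by auto
  then have "sum f (UNIV-{i}) \<ge> sum (\<lambda>_. p) (UNIV-{i})" by (intro sum_mono) auto
  moreover have "sum (\<lambda>_. p) (UNIV-{i}) = (real CARD('a) - 1) * p"
    by (simp add: card_Diff_singleton of_nat_diff)
  ultimately have "sum f UNIV \<ge> f i + (real CARD('a) - 1) * p"
    by (simp add: sum.remove[of UNIV i])
  then show False using assms by (simp add: algebra_simps)
qed

lemma peak_unique:
  assumes "single_peaked R" "ereal a \<in> cdom" "R (ereal a) (peak R)"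
  shows "ereal a = peak R"
proof -
  obtain q where q: "peak_set R = {q}" using assms(1) unfolding single_peaked_def by blast
  then have pk: "peak R = q" by (simp add: peak_def)
  have qc: "q \<in> cdom" and qm: "\<forall>y\<in>cdom. R q y" using q unfolding peak_set_def by auto
  have ip: "is_pref R" using assms(1) unfolding single_peaked_def by blast
  have "\<forall>y\<in>cdom. R (ereal a) y"
    using ip qm qc assms(2,3) pk unfolding is_pref_def by blast
  then have "ereal a \<in> peak_set R" using assms(2) unfolding peak_set_def by blast
  then show ?thesis using q pk by auto
qed

theorem lemma5:
  fixes \<phi> :: "('a::finite \<Rightarrow> pref) \<Rightarrow> real \<Rightarrow> 'a \<Rightarrow> real"
  assumes "is_rule \<phi>"
    and "own_peak_only \<phi>"
    and "envy_free \<phi> \<or> ed_lower_bound \<phi>"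
  shows "ed_guarantee \<phi>"
  unfolding ed_guarantee_def
proof (intro allI impI, elim conjE)
  fix R :: "'a \<Rightarrow> pref" and \<Omega> i
  assume ec: "economy R \<Omega>" and pk: "peak (R i) = ereal (\<Omega> / real CARD('a))"
  define p where "p = \<Omega> / real CARD('a)"
  have Om: "\<Omega> > 0" using ec by (simp add: economy_def)
  have p0: "p > 0" using Om by (simp add: p_def)
  have np: "real CARD('a) * p = \<Omega>" by (simp add: p_def)
  have spi: "single_peaked (R i)" using ec by (simp add: economy_def)
  have rule: "\<And>R :: 'a \<Rightarrow> pref. economy R \<Omega> \<Longrightarrow> (\<forall>j. 0 \<le> \<phi> R \<Omega> j) \<and> sum (\<phi> R \<Omega>) UNIV = \<Omega>"
    using assms(1) unfolding is_rule_def by blast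
  define a where "a = \<phi> R \<Omega> i"
  have a0: "0 \<le> a" using rule[OF ec] by (simp add: a_def)
  have key: "a = p"
    using assms(3)
  proof
    assume edl: "ed_lower_bound \<phi>"
    have "R i (ereal a) (peak (R i))" using edl ec pk unfolding ed_lower_bound_def a_def by auto
    then have "ereal a = peak (R i)" using peak_unique[OF spi] a0 by (simp add: cdom_def)
    then show "a = p" using pk by (simp add: p_def)
  next
    assume ef: "envy_free \<phi>"
    have gen: False if c0: "0 < c" and
      hyp: "\<And>y. 0 \<le> y \<Longrightarrow> y \<le> \<Omega> \<Longrightarrow> y \<noteq> p \<Longrightarrow> (a < p \<longleftrightarrow> p < y) \<Longrightarrow>
               min (c*(a-p)) (p-a) < min (c*(y-p)) (p-y)" and anp: "a \<noteq> p" for c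
    proof -
      define R2 where "R2 = R(i := fpref c p)"
      have sp: "single_peaked (fpref c p)" "peak (fpref c p) = ereal p"
        using fpref_sp[OF c0] p0 by auto
      have ec2: "economy R2 \<Omega>" using ec sp unfolding R2_def economy_def by auto
      have "peak (fpref c p) = peak (R i)" using sp(2) pk by (simp add: p_def)
      then have ai: "\<phi> R2 \<Omega> i = a"
        using assms(2) ec sp(1) unfolding own_peak_only_def R2_def a_def by simp
      have r2: "(\<forall>j. 0 \<le> \<phi> R2 \<Omega> j) \<and> sum (\<phi> R2 \<Omega>) UNIV = \<Omega>" using rule[OF ec2] .
      obtain j where j: "j \<noteq> i" "\<phi> R2 \<Omega> j \<noteq> p" "a < p \<longleftrightarrow> p < \<phi> R2 \<Omega> j"
      proof (cases "a < p")
        case True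
        then obtain j where "j \<noteq> i" "\<phi> R2 \<Omega> j > p"
          using exists_big[of "\<phi> R2 \<Omega>" p i] r2 np ai True by auto
        then show ?thesis using that True by auto
      next
        case False
        then have "a > p" using anp by auto
        then obtain j where "j \<noteq> i" "\<phi> R2 \<Omega> j < p"
          using exists_small[of "\<phi> R2 \<Omega>" p i] r2 np ai \<open>a > p\<close> by auto
        then show ?thesis using that False by auto
      qed
      define y where "y = \<phi> R2 \<Omega> j"
      have y0: "0 \<le> y" using r2 by (simp add: y_def)
      have yO: "y \<le> \<Omega>"
      proof -
        have "y \<le> sum (\<phi> R2 \<Omega>) UNIV" unfolding y_def
          by (rule member_le_sum) (use r2 in auto)
        then show ?thesis using r2 by simp
      qed
      have "min (c*(a-p)) (p-a) < min (c*(y-p)) (p-y)"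
        using hyp[OF y0 yO] j by (simp add: y_def)
      then have lt: "fv c p (ereal a) < fv c p (ereal y)" using fv_less[OF c0] by blast
      have "R2 i (ereal (\<phi> R2 \<Omega> i)) (ereal (\<phi> R2 \<Omega> j))"
        using ef ec2 j(1)[symmetric] unfolding envy_free_def by blast
      then have "fv c p (ereal y) \<le> fv c p (ereal a)"
        using ai by (simp add: R2_def fpref_def y_def)
      then show False using lt by simp
    qed
    show "a = p"
    proof (rule ccontr)
      assume anp: "a \<noteq> p"
      show False
      proof (cases "a < p")
        case True
        define c where "c = (\<Omega> - p) / (p - a) + 1"
        have "0 < CARD('a)" by simp
        then have n1: "real CARD('a) \<ge> 1" by linarith
        have "1 * p \<le> real CARD('a) * p" by (rule mult_right_mono[OF n1]) (use p0 in linarith)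
        then have Op: "\<Omega> \<ge> p" using np by (metis mult_1)
        have "(\<Omega> - p) / (p - a) \<ge> 0" using Op True by (intro divide_nonneg_pos) auto
        then have c0: "0 < c" unfolding c_def by linarith
        have pa: "p - a \<noteq> 0" using True by linarith
        have "(\<Omega> - p) / (p - a) * (a - p) = -(\<Omega> - p)"
        proof -
          have "(\<Omega> - p) / (p - a) * (a - p) = - ((\<Omega> - p) / (p - a) * (p - a))" by (metis minus_diff_eq mult_minus_right)
          also have "\<dots> = -(\<Omega> - p)" using pa by simp
          finally show ?thesis .
        qed
        then have ca: "c*(a-p) = -(\<Omega> - p) + (a - p)"
          unfolding c_def distrib_right mult.left_neutral by linarith
        show False
        proof (rule gen[OF c0 _ anp])
          fix y assume y: "0 \<le> y" "y \<le> \<Omega>" "y \<noteq> p" "(a < p \<longleftrightarrow> p < y)"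
          then have yp: "p < y" using True by auto
          have "c*(y-p) > 0" using c0 yp by simp
          then have "min (c*(y-p)) (p-y) = p - y" using yp by simp
          moreover have "min (c*(a-p)) (p-a) = c*(a-p)" using ca True Op by simp
          ultimately show "min (c*(a-p)) (p-a) < min (c*(y-p)) (p-y)"
            using ca y True by simp
        qed
      next
        case False
        then have ap: "a > p" using anp by auto
        define c where "c = (a - p) / (2*p)"
        have c0: "0 < c" unfolding c_def using ap p0 by (intro divide_pos_pos) auto
        have cp: "c * p = (a - p) / 2"
        proof -
          have "c * p = (a - p) * p / (2 * p)" unfolding c_def by simp
          also have "\<dots> = (a - p) / 2" using p0 by (intro nonzero_mult_divide_mult_cancel_right) simp
          finally show ?thesis .
        qed
        show False
        proof (rule gen[OF c0 _ anp])
          fix y assume y: "0 \<le> y" "y \<le> \<Omega>" "y \<noteq> p" "(a < p \<longleftrightarrow> p < y)"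
          then have yp: "y < p" using ap by auto
          have "c*(y-p) \<le> 0" using c0 yp by (simp add: mult_nonneg_nonpos)
          then have m1: "min (c*(y-p)) (p-y) = c*(y-p)" using yp by simp
          have m2: "c*(y-p) \<ge> - (c*p)"
          proof -
            have "c*y \<ge> 0" using c0 y(1) by simp
            then show ?thesis by (simp add: right_diff_distrib)
          qed
          have "min (c*(a-p)) (p-a) \<le> p - a" by simp
          also have "p - a < - (c*p)" unfolding cp using ap by (simp add: field_simps)
          also have "\<dots> \<le> c*(y-p)" by (rule m2)
          also have "\<dots> = min (c*(y-p)) (p-y)" by (rule m1[symmetric])
          finally show "min (c*(a-p)) (p-a) < min (c*(y-p)) (p-y)" .
        qed
      qed
    qed
  qed
  have "ereal p \<in> cdom" using p0 by (simp add: cdom_def)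
  moreover have "\<forall>x\<in>cdom. R i x x" using spi unfolding single_peaked_def is_pref_def by blast
  moreover have "\<phi> R \<Omega> i = p" using key by (simp add: a_def)
  ultimately show "indiff (R i) (ereal (\<phi> R \<Omega> i)) (ereal (\<Omega> / real CARD('a)))"
    unfolding indiff_def p_def by simp
qed

end
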